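(* Consider the problem of maximizing a linear function $g(\mathbf{z})$ over $\mathbf{z}=(\mathbf{x},\mathbf{y})\in\mathbb{R}^{m+n}$ subject to $\mathcal{B}(\mathbf{x},\mathbf{y})\preceq 0$, where $\mathcal{B}(\mathbf{x},\mathbf{y})=F+\sum_i x_iH_i+\sum_j y_jG_j+\sum_{i,j}x_iy_jF_{i,j}$. Run the iterative procedure described below starting from a strictly feasible $\mathbf{z}^0$ (i.e., $\mathcal{B}(\mathbf{z}^0)\prec 0$). Then every iterate $\mathbf{z}^i$ produced by the procedure (for every $i$ for which it is produced) is a feasible solution of this problem, i.e., $\mathcal{B}(\mathbf{z}^i)\preceq 0$.
   Context: $F,H_i,G_j,F_{i,j}$ are constant real symmetric $p\times p$ matrices; $\preceq$ is the positive-semidefinite (Loewner) order. Decompose $\mathcal{B}=\mathcal{B}^+-\mathcal{B}^-$ as follows: $\Gamma$ is the $mp\times np$ block matrix with $(i,j)$ block $\tfrac12F_{i,j}$, $\Omega=(H_1\cdots H_m\ G_1\cdots G_n)$, $M=\begin{pmatrix}0&\Gamma\\ \Gamma^{\mathsf T}&0\end{pmatrix}=V^{\mathsf T}DV$ an eigendecomposition, $D^+$ is $D$ with negative entries set to $0$, $D^-=D^+-D$, $M_1=V^{\mathsf T}D^+V$, $M_2=V^{\mathsf T}D^-V$, $\mathcal{B}^+(\mathbf{z})=(\mathbf{z}\otimes I)^{\mathsf T}M_1(\mathbf{z}\otimes I)+\Omega(\mathbf{z}\otimes I)+F$, $\mathcal{B}^-(\mathbf{z})=(\mathbf{z}\otimes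 I)^{\mathsf T}M_2(\mathbf{z}\otimes I)$ ($I$ the $p\times p$ identity). $\mathcal{D}\mathcal{B}^-(\mathbf{z})(\mathbf{u})=\sum_i u_i\,\partial\mathcal{B}^-/\partial z_i(\mathbf{z})$. The iterative procedure (Algorithm 1, BMI-DC): given $\mathbf{z}^k$, let $\mathbf{z}^{k+1}$ be an optimal solution of the convex problem: maximize $g(\mathbf{z})+\tfrac12\delta\|\mathbf{z}-\mathbf{z}^k\|^2$ (with a fixed $\delta<0$) subject to $\mathcal{B}^+(\mathbf{z})-\mathcal{B}^-(\mathbf{z}^k)-\mathcal{D}\mathcal{B}^-(\mathbf{z}^k)(\mathbf{z}-\mathbf{z}^k)\preceq 0$; repeat until $\|\mathbf{z}^k-\mathbf{z}^{k-1}\|<\varepsilon$ for a given tolerance $\varepsilon\ge 0$, and return the set of all iterates $\mathbf{z}^0,\dots,\mathbf{z}^k$. *)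

theory Defs
  imports "HOL-Analysis.Analysis"
begin

(* p x p real matrices are  real^'p^'p ; z = (x,y) in R^(m+n) is  real^('m+'n)
   with x_i = z$(Inl i), y_j = z$(Inr j). Block matrices of size (m+n)p are
   indexed by ('m+'n) x 'p, i.e. block index k and inner index a. *)

definition symmetric_mat :: "real^'k^'k \<Rightarrow> bool" where
  "symmetric_mat A \<longleftrightarrow> transpose A = A"

definition diagonal_mat :: "real^'k^'k \<Rightarrow> bool" where
  "diagonal_mat D \<longleftrightarrow> (\<forall>i j. i \<noteq> j \<longrightarrow> D$i$j = 0)"

definition loewner_le :: "real^'k^'k \<Rightarrow> real^'k^'k \<Rightarrow> bool" where
  "loewner_le A B \<longleftrightarrow> (\<forall>v. 0 \<le> v \<bullet> ((B - A) *v v))"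

definition loewner_less :: "real^'k^'k \<Rightarrow> real^'k^'k \<Rightarrow> bool" where
  "loewner_less A B \<longleftrightarrow> (\<forall>v. v \<noteq> 0 \<longrightarrow> 0 < v \<bullet> ((B - A) *v v))"

definition BMI ::
  "real^'p^'p \<Rightarrow> ('m \<Rightarrow> real^'p^'p) \<Rightarrow> ('n \<Rightarrow> real^'p^'p) \<Rightarrow> ('m \<Rightarrow> 'n \<Rightarrow> real^'p^'p)
   \<Rightarrow> real^('m::finite + 'n::finite) \<Rightarrow> real^'p^'p" where
  "BMI F H G Fm z = F + (\<Sum>i\<in>UNIV. z$(Inl i) *\<^sub>R H i) + (\<Sum>j\<in>UNIV. z$(Inr j) *\<^sub>R G j)
      + (\<Sum>i\<in>UNIV. \<Sum>j\<in>UNIV. (z$(Inl i) * z$(Inr j)) *\<^sub>R Fm i j)"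

definition kronI :: "real^'k::finite \<Rightarrow> real^'p::finite^('k \<times> 'p)" where
  "kronI z = (\<chi> r b. if snd r = b then z$(fst r) else 0)"

definition Gamma :: "('m::finite \<Rightarrow> 'n::finite \<Rightarrow> real^'p::finite^'p) \<Rightarrow> real^('n \<times> 'p)^('m \<times> 'p)" where
  "Gamma Fm = (\<chi> r c. (1/2) * Fm (fst r) (fst c) $ snd r $ snd c)"

definition Mmat :: "('m::finite \<Rightarrow> 'n::finite \<Rightarrow> real^'p::finite^'p) \<Rightarrow> real^(('m+'n) \<times> 'p)^(('m+'n) \<times> 'p)" where
  "Mmat Fm = (\<chi> r c. case (fst r, fst c) of
       (Inl i, Inr j) \<Rightarrow> Gamma Fm $ (i, snd r) $ (j, snd c)
     | (Inr j, Inl i) \<Rightarrow> transpose (Gamma Fm) $ (j, snd r) $ (i, snd c)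
     | _ \<Rightarrow> 0)"

definition Omega :: "('m::finite \<Rightarrow> real^'p::finite^'p) \<Rightarrow> ('n::finite \<Rightarrow> real^'p^'p) \<Rightarrow> real^(('m+'n) \<times> 'p)^'p" where
  "Omega H G = (\<chi> a c. case fst c of Inl i \<Rightarrow> H i $ a $ snd c | Inr j \<Rightarrow> G j $ a $ snd c)"

definition Dplus :: "real^'k^'k \<Rightarrow> real^'k^'k" where
  "Dplus D = (\<chi> i j. max (D$i$j) 0)"

definition Dminus :: "real^'k^'k \<Rightarrow> real^'k^'k" where
  "Dminus D = Dplus D - D"

definition M1 :: "real^'k^'k \<Rightarrow> real^'k^'k \<Rightarrow> real^'k^'k" where
  "M1 V D = transpose V ** Dplus D ** V"

definition M2 :: "real^'k^'k \<Rightarrow> real^'k^'k \<Rightarrow> real^'k^'k" where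
  "M2 V D = transpose V ** Dminus D ** V"

definition Bplus ::
  "real^'p^'p \<Rightarrow> ('m \<Rightarrow> real^'p^'p) \<Rightarrow> ('n \<Rightarrow> real^'p^'p)
   \<Rightarrow> real^(('m::finite+'n::finite) \<times> 'p)^(('m+'n) \<times> 'p) \<Rightarrow> real^(('m+'n) \<times> 'p)^(('m+'n) \<times> 'p)
   \<Rightarrow> real^('m+'n) \<Rightarrow> real^'p^'p" where
  "Bplus F H G V D z = transpose (kronI z) ** M1 V D ** kronI z + Omega H G ** kronI z + F"

definition Bminus ::
  "real^(('m::finite+'n::finite) \<times> 'p)^(('m+'n) \<times> 'p) \<Rightarrow> real^(('m+'n) \<times> 'p)^(('m+'n) \<times> 'p)
   \<Rightarrow> real^('m+'n) \<Rightarrow> real^'p^'p" where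
  "Bminus V D z = transpose (kronI z) ** M2 V D ** kronI z"

definition DBminus ::
  "real^(('m::finite+'n::finite) \<times> 'p)^(('m+'n) \<times> 'p) \<Rightarrow> real^(('m+'n) \<times> 'p)^(('m+'n) \<times> 'p)
   \<Rightarrow> real^('m+'n) \<Rightarrow> real^('m+'n) \<Rightarrow> real^'p^'p" where
  "DBminus V D z u = (\<Sum>k\<in>UNIV. u$k *\<^sub>R
      vector_derivative (\<lambda>t. Bminus V D (z + t *\<^sub>R axis k 1)) (at 0))"

definition sub_feasible where
  "sub_feasible F H G V D zk z \<longleftrightarrow>
     loewner_le (Bplus F H G V D z - Bminus V D zk - DBminus V D zk (z - zk)) 0"

definition sub_optimal where
  "sub_optimal g \<delta> F H G V D zk z \<longleftrightarrow>
     sub_feasible F H G V D zk z \<and>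
     (\<forall>w. sub_feasible F H G V D zk w \<longrightarrow>
        g w + \<delta>/2 * (norm (w - zk))\<^sup>2 \<le> g z + \<delta>/2 * (norm (z - zk))\<^sup>2)"

end

theory Submission imports Defs begin

lemma matrix_add_rdistrib': "((B + C) ** A) = (B ** A) + (C ** A)"
  by (vector matrix_matrix_mult_def sum.distrib[symmetric] field_simps)
lemma matrix_diff_ldistrib': "(A ** (B - C)) = (A ** B) - (A ** (C::real^_^_))"
  by (vector matrix_matrix_mult_def sum_subtractf[symmetric] field_simps)
lemma matrix_diff_rdistrib': "((B - C) ** A) = (B ** A) - (C ** (A::real^_^_))"
  by (vector matrix_matrix_mult_def sum_subtractf[symmetric] field_simps)
lemma transpose_add': "transpose (A + B) = transpose A + transpose B"
  by (vector transpose_def)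
lemma transpose_diff': "transpose (A - B) = transpose A - transpose (B::real^_^_)"
  by (vector transpose_def)

lemma kronI_add: "kronI (a + b) = kronI a + kronI b"
  by (vector kronI_def)
lemma kronI_diff: "kronI (a - b) = kronI a - kronI b"
  by (vector kronI_def)
lemma kronI_scale: "kronI (c *\<^sub>R a) = c *\<^sub>R kronI a"
  by (vector kronI_def)

lemma quad_expand:
  fixes M :: "real^'k^'k" and K L :: "real^'p^'k"
  shows "transpose (K + t *\<^sub>R L) ** M ** (K + t *\<^sub>R L) =
    transpose K ** M ** K + t *\<^sub>R (transpose L ** M ** K + transpose K ** M ** L)
    + (t^2) *\<^sub>R (transpose L ** M ** L)"
  by (simp add: transpose_add' transpose_scalar matrix_add_rdistrib' matrix_add_ldistrib
     matrix_scalar_ac scalar_matrix_assoc[symmetric] algebra_simps power2_eq_square)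

lemma deriv_quad:
  fixes A X Y :: "real^'k^'j"
  shows "vector_derivative (\<lambda>t. A + t *\<^sub>R X + (t^2) *\<^sub>R Y) (at 0) = X"
proof -
  have D: "((\<lambda>t. A + t *\<^sub>R X + (t^2) *\<^sub>R Y) has_vector_derivative X) (at 0)"
    by (auto intro!: derivative_eq_intros)
  from vector_derivative_at[OF D] show ?thesis .
qed

lemma sum_kron_col:
  fixes f g :: "('k::finite) \<times> ('p::finite) \<Rightarrow> real"
  shows "(\<Sum>r\<in>UNIV. (if snd r = a then f r else 0) * g r) = (\<Sum>k\<in>UNIV. f (k,a) * g (k, a))"
proof -
  have "(\<Sum>r\<in>UNIV. (if snd r = a then f r else 0) * g r)
      = (\<Sum>k\<in>UNIV. \<Sum>b\<in>UNIV. (if b = a then f (k,b) else 0) * g (k,b))"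
    unfolding sum.cartesian_product UNIV_Times_UNIV by (rule sum.cong) auto
  also have "\<dots> = (\<Sum>k\<in>UNIV. f (k,a) * g (k, a))"
    by (simp add: if_distrib if_distribR sum.delta cong: if_cong)
  finally show ?thesis .
qed

lemma sum_kron_row:
  fixes f g :: "('k::finite) \<times> ('p::finite) \<Rightarrow> real"
  shows "(\<Sum>r\<in>UNIV. g r * (if snd r = a then f r else 0)) = (\<Sum>k\<in>UNIV. g (k, a) * f (k,a))"
  using sum_kron_col[of a f g] by (simp add: mult.commute)

lemma sum_plus_univ: "(\<Sum>k\<in>(UNIV::('a::finite+'b::finite) set). f k) = (\<Sum>i\<in>UNIV. f (Inl i)) + (\<Sum>j\<in>UNIV. f (Inr j))"
  by (subst UNIV_Plus_UNIV[symmetric], subst sum.Plus) auto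

lemma Omega_kron: "Omega H G ** kronI z = (\<Sum>i\<in>UNIV. z$(Inl i) *\<^sub>R H i) + (\<Sum>j\<in>UNIV. z$(Inr j) *\<^sub>R G j)"
  by (simp add: vec_eq_iff matrix_matrix_mult_def kronI_def Omega_def sum_kron_row sum_kron_col sum_plus_univ
      sum_component) (simp add: mult_ac)

lemma Mmat_kron:
  assumes "\<And>i j. symmetric_mat (Fm i j)"
  shows "transpose (kronI z) ** Mmat Fm ** kronI z = (\<Sum>i\<in>UNIV. \<Sum>j\<in>UNIV. (z$(Inl i) * z$(Inr j)) *\<^sub>R Fm i j)"
proof -
  have s: "Fm i j $ b $ a = Fm i j $ a $ b" for i j a b
    using assms[of i j] unfolding symmetric_mat_def transpose_def by (metis vec_lambda_beta)
  show ?thesis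
    apply (simp add: vec_eq_iff matrix_matrix_mult_def kronI_def transpose_def sum_kron_row sum_kron_col
      sum_plus_univ sum_component Mmat_def Gamma_def s)
    apply (simp add: sum_distrib_right)
    apply (subst (2) sum.swap)
    apply (simp add: sum.distrib[symmetric] mult_ac)
    done
qed

lemma BMI_split:
  assumes "\<And>i j. symmetric_mat (Fm i j)" and "Mmat Fm = transpose V ** D ** V"
  shows "BMI F H G Fm z = Bplus F H G V D z - Bminus V D z"
proof -
  have "M1 V D - M2 V D = Mmat Fm"
    unfolding M1_def M2_def assms(2) Dminus_def
    by (simp add: matrix_diff_ldistrib' matrix_diff_rdistrib')
  then have "Bplus F H G V D z - Bminus V D z
     = transpose (kronI z) ** Mmat Fm ** kronI z + Omega H G ** kronI z + F"
    unfolding Bplus_def Bminus_def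
    by (simp add: matrix_add_ldistrib matrix_add_rdistrib' algebra_simps)
  also have "\<dots> = BMI F H G Fm z"
    unfolding Mmat_kron[OF assms(1)] Omega_kron BMI_def by (simp add: algebra_simps)
  finally show ?thesis by simp
qed

lemma kronI_basis: "(\<Sum>k\<in>UNIV. u$k *\<^sub>R kronI (axis k 1)) = (kronI (u::real^'k::finite) :: real^'p::finite^('k\<times>'p))"
proof -
  have lin: "linear (kronI :: real^'k \<Rightarrow> real^'p^('k\<times>'p))"
    by (rule linearI) (simp_all add: kronI_add kronI_scale)
  have "kronI u = (kronI (\<Sum>k\<in>UNIV. u$k *\<^sub>R axis k 1) :: real^'p^('k\<times>'p))"
    using basis_expansion[of u] by (simp add: scalar_mult_eq_scaleR)
  also have "\<dots> = (\<Sum>k\<in>UNIV. u$k *\<^sub>R kronI (axis k 1))"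
    by (simp only: linear_sum[OF lin] linear_scale[OF lin])
  finally show ?thesis by simp
qed

lemma DBminus_eq:
  "DBminus V D zk u = transpose (kronI u) ** M2 V D ** kronI zk + transpose (kronI zk) ** M2 V D ** kronI u"
proof -
  define f where "f L = transpose L ** M2 V D ** kronI zk + transpose (kronI zk) ** M2 V D ** L" for L
  have lin: "linear f"
    by (rule linearI) (simp_all add: f_def transpose_add' transpose_scalar matrix_add_rdistrib' matrix_add_ldistrib
        matrix_scalar_ac scalar_matrix_assoc[symmetric] algebra_simps)
  have vd: "vector_derivative (\<lambda>t. Bminus V D (zk + t *\<^sub>R axis k 1)) (at 0) = f (kronI (axis k 1))" for k
    unfolding Bminus_def kronI_add kronI_scale quad_expand f_def by (rule deriv_quad)
  have "DBminus V D zk u = (\<Sum>k\<in>UNIV. u$k *\<^sub>R f (kronI (axis k 1)))"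
    unfolding DBminus_def vd ..
  also have "\<dots> = f (\<Sum>k\<in>UNIV. u$k *\<^sub>R kronI (axis k 1))"
    by (simp add: linear_sum[OF lin] linear_scale[OF lin])
  also have "\<dots> = f (kronI u)" by (simp add: kronI_basis)
  finally show ?thesis by (simp add: f_def)
qed

lemma quad_form: "(v::real^'a::finite) \<bullet> ((transpose K ** M ** K) *v v) = (K *v v) \<bullet> (M *v (K *v v))"
proof -
  have "(transpose K ** M ** K) *v v = transpose K *v (M *v (K *v v))"
    by (simp only: matrix_vector_mul_assoc matrix_mul_assoc)
  also have "\<dots> = (M *v (K *v v)) v* K" by (rule transpose_matrix_vector)
  finally have "v \<bullet> ((transpose K ** M ** K) *v v) = ((M *v (K *v v)) v* K) \<bullet> v"
    by (simp add: inner_commute)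
  also have "\<dots> = (M *v (K *v v)) \<bullet> (K *v v)" by (rule dot_lmul_matrix)
  finally show ?thesis by (simp add: inner_commute)
qed

lemma M2_psd:
  assumes "diagonal_mat D"
  shows "0 \<le> w \<bullet> (M2 V D *v w)"
proof -
  have "w \<bullet> (M2 V D *v w) = (V *v w) \<bullet> (Dminus D *v (V *v w))"
    unfolding M2_def by (rule quad_form)
  also have "\<dots> = (\<Sum>i\<in>UNIV. (V *v w)$i * (Dminus D$i$i * (V *v w)$i))"
  proof -
    have "(Dminus D *v x)$i = Dminus D$i$i * x$i" for x :: "real^_" and i
    proof -
      have "(Dminus D *v x)$i = (\<Sum>j\<in>UNIV. Dminus D$i$j * x$j)" by (simp add: matrix_vector_mult_def)
      also have "\<dots> = (\<Sum>j\<in>UNIV. if j = i then Dminus D$i$i * x$i else 0)"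
        by (rule sum.cong) (use assms in \<open>auto simp: Dminus_def Dplus_def diagonal_mat_def\<close>)
      finally show ?thesis by simp
    qed
    then show ?thesis by (simp add: inner_vec_def)
  qed
  also have "\<dots> \<ge> 0"
  proof (rule sum_nonneg)
    fix i
    have c: "0 \<le> Dminus D$i$i" by (simp add: Dminus_def Dplus_def)
    have "(V *v w)$i * (Dminus D$i$i * (V *v w)$i) = Dminus D$i$i * ((V *v w)$i * (V *v w)$i)"
      by (simp add: mult_ac)
    also have "\<dots> \<ge> 0" using c by simp
    finally show "0 \<le> (V *v w)$i * (Dminus D$i$i * (V *v w)$i)" by simp
  qed
  finally show ?thesis .
qed

lemma quad_psd:
  assumes "diagonal_mat D"
  shows "0 \<le> v \<bullet> ((transpose K ** M2 V D ** K) *v v)"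
proof -
  have "v \<bullet> ((transpose K ** M2 V D ** K) *v v) = (K *v v) \<bullet> (M2 V D *v (K *v v))"
    by (rule quad_form)
  then show ?thesis using M2_psd[OF assms] by simp
qed


lemma Bminus_gap:
  "Bminus V D z - Bminus V D zk - DBminus V D zk (z - zk) = transpose (kronI (z - zk)) ** M2 V D ** kronI (z - zk)"
proof -
  have e: "kronI z = kronI zk + 1 *\<^sub>R kronI (z - zk)"
    by (simp add: kronI_add[symmetric])
  show ?thesis
    unfolding Bminus_def DBminus_eq e quad_expand by simp
qed

lemma neg_mv: "(- A) *v v = - (A *v (v::real^_))"
  by (simp add: vec_eq_iff matrix_vector_mult_def sum_negf)

lemma loewner_le_0_iff: "loewner_le A 0 \<longleftrightarrow> (\<forall>v. v \<bullet> (A *v v) \<le> 0)"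
  unfolding loewner_le_def
  by (simp add: matrix_vector_mult_diff_rdistrib inner_diff_right neg_mv)

theorem theorem9:
  fixes F :: "real^'p::finite^'p"
    and H :: "'m::finite \<Rightarrow> real^'p^'p"
    and G :: "'n::finite \<Rightarrow> real^'p^'p"
    and Fm :: "'m \<Rightarrow> 'n \<Rightarrow> real^'p^'p"
    and V D :: "real^(('m+'n) \<times> 'p)^(('m+'n) \<times> 'p)"
    and g :: "real^('m+'n) \<Rightarrow> real"
    and \<delta> :: real
    and z :: "nat \<Rightarrow> real^('m+'n)"
    and N :: nat
  assumes "symmetric_mat F"
    and "\<And>i. symmetric_mat (H i)"
    and "\<And>j. symmetric_mat (G j)"
    and "\<And>i j. symmetric_mat (Fm i j)"
    and "linear g"
    and "\<delta> < 0"
    and "orthogonal_matrix V" and "diagonal_mat D"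
    and "Mmat Fm = transpose V ** D ** V"
    and "loewner_less (BMI F H G Fm (z 0)) 0"
    and "\<And>k. k < N \<Longrightarrow> sub_optimal g \<delta> F H G V D (z k) (z (Suc k))"
  shows "\<forall>i\<le>N. loewner_le (BMI F H G Fm (z i)) 0"
proof (intro allI impI)
  fix i assume "i \<le> N"
  show "loewner_le (BMI F H G Fm (z i)) 0"
  proof (cases i)
    case 0
    show ?thesis unfolding loewner_le_0_iff
    proof
      fix v :: "real^'p"
      show "v \<bullet> (BMI F H G Fm (z i) *v v) \<le> 0"
      proof (cases "v = 0")
        case True then show ?thesis by simp
      next
        case False
        with assms(10) have "0 < v \<bullet> ((0 - BMI F H G Fm (z 0)) *v v)"
          unfolding loewner_less_def by blast
        then show ?thesis using 0
          by (simp add: matrix_vector_mult_diff_rdistrib inner_diff_right neg_mv)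
      qed
    qed
  next
    case (Suc k)
    with \<open>i \<le> N\<close> have "k < N" by simp
    from assms(11)[OF this] have feas: "sub_feasible F H G V D (z k) (z i)"
      unfolding sub_optimal_def Suc by blast
    define A where "A = Bplus F H G V D (z i) - Bminus V D (z k) - DBminus V D (z k) (z i - z k)"
    define Q where "Q = transpose (kronI (z i - z k)) ** M2 V D ** kronI (z i - z k)"
    have A: "\<forall>v. v \<bullet> (A *v v) \<le> 0"
      using feas unfolding sub_feasible_def A_def loewner_le_0_iff .
    have B: "BMI F H G Fm (z i) = A - Q"
      unfolding BMI_split[OF assms(4,9)] A_def Q_def Bminus_gap[symmetric] by simp
    show ?thesis unfolding loewner_le_0_iff
    proof
      fix v :: "real^'p"
      have "0 \<le> v \<bullet> (Q *v v)" unfolding Q_def by (rule quad_psd[OF assms(8)])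
      moreover have "v \<bullet> (A *v v) \<le> 0" using A by blast
      ultimately show "v \<bullet> (BMI F H G Fm (z i) *v v) \<le> 0"
        unfolding B by (simp add: matrix_vector_mult_diff_rdistrib inner_diff_right neg_mv)
    qed
  qed
qed

end
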